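(* Let $n,t$ be integers with $1\le t\le n-3$, and let $P_{n,t}^{++}$ be the graph obtained from the path $v_1v_2\dots v_{n-1}$ by adding a new vertex $u$ and the two edges $uv_t$ and $uv_{t+2}$. Then $\mu_2(P_{n,t}^{++})<4$.
   Context: For a graph $G$ of order $n$, $\mu_1(G)\ge\mu_2(G)\ge\dots\ge\mu_n(G)$ denote the eigenvalues of the Laplacian matrix $L(G)=D(G)-A(G)$. *)

theory Defs
  imports "Jordan_Normal_Form.Char_Poly"
begin

text \<open>Simple graphs on the vertex set {0..<n}, given by a symmetric irreflexive
adjacency predicate.  Laplacian matrix L(G) = D(G) - A(G).\<close>

definition laplacian :: "nat \<Rightarrow> (nat \<Rightarrow> nat \<Rightarrow> bool) \<Rightarrow> real mat" where
  "laplacian n adj = mat n n (\<lambda>(i, j).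
     if i = j then real (card {k. k < n \<and> adj i k})
     else if adj i j then -1 else 0)"

definition eigenvalues_desc :: "real mat \<Rightarrow> real list" where
  "eigenvalues_desc M = (THE xs. sorted_wrt (\<ge>) xs \<and>
      char_poly M = prod_list (map (\<lambda>a. [:- a, 1:]) xs))"

definition mu :: "real mat \<Rightarrow> nat \<Rightarrow> real" where
  "mu M k = eigenvalues_desc M ! (k - 1)"

text \<open>P_{n,t}^{++}: path v_1 ... v_{n-1} plus vertex u adjacent to v_t and v_{t+2}.
Encoding: v_i is vertex i-1 (i = 1..n-1), u is vertex n-1.\<close>

definition Pntpp_edge :: "nat \<Rightarrow> nat \<Rightarrow> nat \<Rightarrow> nat \<Rightarrow> bool" where
  "Pntpp_edge n t i j \<longleftrightarrow>
     (i + 1 < n \<and> j + 1 < n \<and> (j = i + 1 \<or> i = j + 1)) \<or>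
     (i = n - 1 \<and> (j = t - 1 \<or> j = t + 1)) \<or>
     (j = n - 1 \<and> (i = t - 1 \<or> i = t + 1))"

end

theory Submission
  imports Defs "Jordan_Normal_Form.Schur_Decomposition"
begin


lemma lin_prod_mset_eq:
  fixes xs ys :: "'a::idom list"
  assumes "prod_list (map (\<lambda>a. [:-a,1:]) xs) = prod_list (map (\<lambda>a. [:-a,1:]) ys)"
  shows "mset xs = mset ys"
  using assms
proof (induction xs arbitrary: ys)
  case Nil
  then have "degree (prod_list (map (\<lambda>a. [:-a,1:]) ys)) = 0" by simp
  moreover have "degree (prod_list (map (\<lambda>a. [:-a,1::'a:]) ys)) = length ys"
    using degree_linear_factors[of uminus ys] by simp
  ultimately show ?case by simp
next
  case (Cons x xs)
  have "poly (prod_list (map (\<lambda>a. [:-a,1:]) ys)) x = 0"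
    using Cons.prems[symmetric] by (simp add: poly_prod_list_zero_iff)
  hence "poly (prod_list (map (\<lambda>a. [:-a,1:]) ys)) x = 0" .
  then have xin: "x \<in> set ys"
    by (auto simp: poly_prod_list prod_list_zero_iff o_def)
  have "mset ys = mset (x # remove1 x ys)" using xin by simp
  then have "prod_list (map (\<lambda>a. [:-a,1:]) ys) = prod_list (map (\<lambda>a. [:-a,1:]) (x # remove1 x ys))"
  proof -
    have "prod_list (map (\<lambda>a. [:-a,1:]) ys) = prod_mset (image_mset (\<lambda>a. [:-a,1:]) (mset ys))"
      by (simp add: prod_mset_prod_list[symmetric])
    also have "\<dots> = prod_mset (image_mset (\<lambda>a. [:-a,1:]) (mset (x # remove1 x ys)))"
      using \<open>mset ys = mset (x # remove1 x ys)\<close> by (simp only:)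
    also have "\<dots> = prod_list (map (\<lambda>a. [:-a,1:]) (x # remove1 x ys))"
      by (simp only: prod_mset_prod_list[symmetric] mset_map)
    finally show ?thesis .
  qed
  then have "[:-x,1:] * prod_list (map (\<lambda>a. [:-a,1:]) xs) = [:-x,1:] * prod_list (map (\<lambda>a. [:-a,1:]) (remove1 x ys))"
    using Cons.prems by simp
  then have "prod_list (map (\<lambda>a. [:-a,1:]) xs) = prod_list (map (\<lambda>a. [:-a,1:]) (remove1 x ys))"
    by (subst (asm) mult_left_cancel) auto
  from Cons.IH[OF this] show ?case using xin by simp
qed

lemma sorted_desc_mset_eq:
  fixes xs ys :: "real list"
  assumes "sorted_wrt (\<ge>) xs" "sorted_wrt (\<ge>) ys" "mset xs = mset ys"
  shows "xs = ys"
proof -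
  have "sorted (rev xs)" "sorted (rev ys)" using assms by (auto simp: sorted_wrt_rev)
  have "sort (rev ys) = rev xs"
    by (rule properties_for_sort) (use assms(3) \<open>sorted (rev xs)\<close> in auto)
  moreover have "sort (rev ys) = rev ys"
    by (rule properties_for_sort) (use \<open>sorted (rev ys)\<close> in auto)
  ultimately show ?thesis by (metis rev_rev_ident)
qed



lemma edge_split:
  assumes "i < m + 2" "k < m + 2" "a + 2 \<le> m"
  shows "(if Pntpp_edge (m+2) (Suc a) i k then h i k else (0::real)) =
    (if k = Suc i \<and> i < m then h i k else 0) + (if i = Suc k \<and> k < m then h i k else 0)
    + (if i = m+1 \<and> k = a then h i k else 0) + (if i = m+1 \<and> k = a+2 then h i k else 0)
    + (if k = m+1 \<and> i = a then h i k else 0) + (if k = m+1 \<and> i = a+2 then h i k else 0)"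
  using assms unfolding Pntpp_edge_def by auto

lemma dsum_edges:
  fixes h :: "nat \<Rightarrow> nat \<Rightarrow> real"
  assumes "a + 2 \<le> m"
  shows "(\<Sum>i<m+2. \<Sum>k<m+2. if Pntpp_edge (m+2) (Suc a) i k then h i k else 0) =
    (\<Sum>i<m. h i (Suc i)) + (\<Sum>i<m. h (Suc i) i) + h (m+1) a + h (m+1) (a+2) + h a (m+1) + h (a+2) (m+1)"
proof -
  have "(\<Sum>i<m+2. \<Sum>k<m+2. if Pntpp_edge (m+2) (Suc a) i k then h i k else 0) =
    (\<Sum>i<m+2. \<Sum>k<m+2. (if k = Suc i \<and> i < m then h i k else 0) + (if i = Suc k \<and> k < m then h i k else 0)
    + (if i = m+1 \<and> k = a then h i k else 0) + (if i = m+1 \<and> k = a+2 then h i k else 0)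
    + (if k = m+1 \<and> i = a then h i k else 0) + (if k = m+1 \<and> i = a+2 then h i k else 0))"
    by (intro sum.cong refl edge_split) (use assms in auto)
  also have "\<dots> = (\<Sum>i<m+2. \<Sum>k<m+2. (if k = Suc i \<and> i < m then h i k else 0)) +
     (\<Sum>i<m+2. \<Sum>k<m+2. (if i = Suc k \<and> k < m then h i k else 0)) +
     (\<Sum>i<m+2. \<Sum>k<m+2. (if i = m+1 \<and> k = a then h i k else 0)) +
     (\<Sum>i<m+2. \<Sum>k<m+2. (if i = m+1 \<and> k = a+2 then h i k else 0)) +
     (\<Sum>i<m+2. \<Sum>k<m+2. (if k = m+1 \<and> i = a then h i k else 0)) +
     (\<Sum>i<m+2. \<Sum>k<m+2. (if k = m+1 \<and> i = a+2 then h i k else 0))"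
    by (simp add: sum.distrib)
  also have "(\<Sum>i<m+2. \<Sum>k<m+2. (if k = Suc i \<and> i < m then h i k else 0)) = (\<Sum>i<m. h i (Suc i))"
  proof -
    have "(\<Sum>i<m+2. \<Sum>k<m+2. (if k = Suc i \<and> i < m then h i k else 0)) = (\<Sum>i<m+2. if i < m then h i (Suc i) else 0)"
      by (intro sum.cong refl) (auto simp: sum.delta' if_distrib cong: if_cong)
    also have "\<dots> = (\<Sum>i<m. h i (Suc i))"
      by (simp add: sum.inter_filter[symmetric])
    finally show ?thesis .
  qed
  also have "(\<Sum>i<m+2. \<Sum>k<m+2. (if i = Suc k \<and> k < m then h i k else 0)) = (\<Sum>i<m. h (Suc i) i)"
  proof -
    have "(\<Sum>i<m+2. \<Sum>k<m+2. (if i = Suc k \<and> k < m then h i k else 0)) = (\<Sum>k<m+2. \<Sum>i<m+2. (if i = Suc k \<and> k < m then h i k else 0))"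
      by (rule sum.swap)
    also have "\<dots> = (\<Sum>k<m+2. if k < m then h (Suc k) k else 0)"
      by (intro sum.cong refl) (auto simp: sum.delta' if_distrib cong: if_cong)
    also have "\<dots> = (\<Sum>i<m. h (Suc i) i)"
      by (simp add: sum.inter_filter[symmetric])
    finally show ?thesis .
  qed
  also have "(\<Sum>i<m+2. \<Sum>k<m+2. (if i = m+1 \<and> k = a then h i k else 0)) = h (m+1) a"
    using assms by (simp add: sum.delta' if_distrib cong: if_cong)
  also have "(\<Sum>i<m+2. \<Sum>k<m+2. (if i = m+1 \<and> k = a+2 then h i k else 0)) = h (m+1) (a+2)"
    using assms by (simp add: sum.delta' if_distrib cong: if_cong)
  also have "(\<Sum>i<m+2. \<Sum>k<m+2. (if k = m+1 \<and> i = a then h i k else 0)) = h a (m+1)"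
    using assms by (simp add: sum.delta' if_distrib cong: if_cong)
  also have "(\<Sum>i<m+2. \<Sum>k<m+2. (if k = m+1 \<and> i = a+2 then h i k else 0)) = h (a+2) (m+1)"
    using assms by (simp add: sum.delta' if_distrib cong: if_cong)
  finally show ?thesis .
qed

lemma edge_irrefl: "a + 2 \<le> m \<Longrightarrow> \<not> Pntpp_edge (m+2) (Suc a) i i"
  unfolding Pntpp_edge_def by auto

lemma card_as_sum: "real (card {k. k < (n::nat) \<and> P k}) = (\<Sum>k<n. if P k then 1 else 0)"
proof -
  have "{k. k < n \<and> P k} = {k \<in> {..<n}. P k}" by auto
  then have "real (card {k. k < n \<and> P k}) = (\<Sum>k\<in>{k \<in> {..<n}. P k}. 1)"
    by (simp only: real_of_card)
  also have "\<dots> = (\<Sum>k<n. if P k then 1 else 0)"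
    by (rule sum.inter_filter[of "{..<n}" "\<lambda>_. (1::real)" P, OF finite_lessThan])
  finally show ?thesis .
qed

lemma qform:
  fixes g :: "nat \<Rightarrow> nat \<Rightarrow> real"
  assumes am: "a + 2 \<le> m"
  shows "(\<Sum>i<m+2. \<Sum>j<m+2. laplacian (m+2) (Pntpp_edge (m+2) (Suc a)) $$ (i,j) * g i j) =
    ((\<Sum>i<m. g i i) + (\<Sum>i<m. g (Suc i) (Suc i)) + g (m+1) (m+1) + g (m+1) (m+1) + g a a + g (a+2) (a+2))
    - ((\<Sum>i<m. g i (Suc i)) + (\<Sum>i<m. g (Suc i) i) + g (m+1) a + g (m+1) (a+2) + g a (m+1) + g (a+2) (m+1))"
proof -
  define adj where "adj = Pntpp_edge (m+2) (Suc a)"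
  define deg where "deg i = real (card {k. k < m+2 \<and> adj i k})" for i
  have deg_sum: "deg i = (\<Sum>k<m+2. if adj i k then 1 else 0)" for i
    unfolding deg_def by (rule card_as_sum)
  have pw: "laplacian (m+2) adj $$ (i,j) * g i j = (if i = j then deg i * g i i else 0) - (if adj i j then g i j else 0)"
    if "i < m+2" "j < m+2" for i j
    using that edge_irrefl[OF am, of i] unfolding laplacian_def deg_def adj_def by auto
  have "(\<Sum>i<m+2. \<Sum>j<m+2. laplacian (m+2) adj $$ (i,j) * g i j) =
     (\<Sum>i<m+2. \<Sum>j<m+2. (if i = j then deg i * g i i else 0) - (if adj i j then g i j else 0))"
    by (intro sum.cong refl pw) auto
  also have "\<dots> = (\<Sum>i<m+2. \<Sum>j<m+2. (if i = j then deg i * g i i else 0)) - (\<Sum>i<m+2. \<Sum>j<m+2. if adj i j then g i j else 0)"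
    by (simp only: sum_subtractf)
  also have "(\<Sum>i<m+2. \<Sum>j<m+2. (if i = j then deg i * g i i else 0)) = (\<Sum>i<m+2. deg i * g i i)"
    by (intro sum.cong refl) (simp add: sum.delta)
  also have "(\<Sum>i<m+2. deg i * g i i) = (\<Sum>i<m+2. \<Sum>k<m+2. if adj i k then g i i else 0)"
    unfolding deg_sum sum_distrib_right by (intro sum.cong refl) simp
  also have "\<dots> = (\<Sum>i<m. g i i) + (\<Sum>i<m. g (Suc i) (Suc i)) + g (m+1) (m+1) + g (m+1) (m+1) + g a a + g (a+2) (a+2)"
    unfolding adj_def by (rule dsum_edges[OF am])
  also have "(\<Sum>i<m+2. \<Sum>j<m+2. if adj i j then g i j else 0) = (\<Sum>i<m. g i (Suc i)) + (\<Sum>i<m. g (Suc i) i) + g (m+1) a + g (m+1) (a+2) + g a (m+1) + g (a+2) (m+1)"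
    unfolding adj_def by (rule dsum_edges[OF am])
  finally show ?thesis unfolding adj_def .
qed



lemma cm_add: "(cmod (p+q))^2 = (cmod p)^2 + (cmod q)^2 + 2*Re(cnj p * q)"
  unfolding cmod_power2 by (simp add: power2_eq_square algebra_simps)

lemma cm_self: "Re(cnj p * p) = (cmod p)^2"
  unfolding cmod_power2 by (simp add: power2_eq_square)

lemma g_sym: "Re(cnj q * p) = Re(cnj p * q)"
  by (simp add: algebra_simps)

lemma key_form:
  fixes x :: "nat \<Rightarrow> complex"
  assumes am: "a + 2 \<le> m" and cons: "x a + x (a+2) = 0" and nz: "\<exists>i<m+2. x i \<noteq> 0"
  shows "(\<Sum>i<m+2. \<Sum>j<m+2. laplacian (m+2) (Pntpp_edge (m+2) (Suc a)) $$ (i,j) * Re (cnj (x i) * x j))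
         < 4 * (\<Sum>i<m+2. (cmod (x i))^2)"
proof -
  define g where "g i j = Re (cnj (x i) * x j)" for i j
  define s where "s i = (cmod (x i + x (Suc i)))^2" for i
  define Q where "Q = (\<Sum>i<m+2. \<Sum>j<m+2. laplacian (m+2) (Pntpp_edge (m+2) (Suc a)) $$ (i,j) * g i j)"
  have gii: "g i i = (cmod (x i))^2" for i unfolding g_def by (rule cm_self)
  have gsym: "g j i = g i j" for i j unfolding g_def by (rule g_sym)
  have sdef: "s i = g i i + g (Suc i) (Suc i) + 2 * g i (Suc i)" for i
    unfolding s_def gii g_def by (rule cm_add)
  have Qeq: "Q = ((\<Sum>i<m. g i i) + (\<Sum>i<m. g (Suc i) (Suc i)) + g (m+1) (m+1) + g (m+1) (m+1) + g a a + g (a+2) (a+2))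
    - ((\<Sum>i<m. g i (Suc i)) + (\<Sum>i<m. g (Suc i) i) + g (m+1) a + g (m+1) (a+2) + g a (m+1) + g (a+2) (m+1))"
    unfolding Q_def by (rule qform[OF am])
  have E': "(\<Sum>i<m. g (Suc i) i) = (\<Sum>i<m. g i (Suc i))" using gsym by simp
  have ssum: "(\<Sum>i<m. s i) = (\<Sum>i<m. g i i) + (\<Sum>i<m. g (Suc i) (Suc i)) + 2 * (\<Sum>i<m. g i (Suc i))"
    by (simp add: sdef sum.distrib sum_distrib_left)
  have D': "(\<Sum>i<m. g (Suc i) (Suc i)) = (\<Sum>i<m. g i i) - g 0 0 + g m m"
    using sum.lessThan_Suc_shift[of "\<lambda>i. g i i" m] sum.lessThan_Suc[of "\<lambda>i. g i i" m] by simp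
  have tot: "(\<Sum>i<m+2. (cmod (x i))^2) = (\<Sum>i<m. g i i) + g m m + g (m+1) (m+1)"
    by (simp add: gii)
  have ua: "g (m+1) a + g (m+1) (a+2) = 0"
  proof -
    have "g (m+1) a + g (m+1) (a+2) = Re (cnj (x (m+1)) * (x a + x (a+2)))"
      unfolding g_def by (simp add: distrib_left)
    also have "\<dots> = 0" unfolding cons by simp
    finally show ?thesis .
  qed
  have bb: "g (a+2) (a+2) = g a a"
  proof -
    have "x (a+2) = - x a" using cons by (simp add: add_eq_0_iff)
    then show ?thesis by (simp add: gii)
  qed
  have main1: "4 * (\<Sum>i<m+2. (cmod (x i))^2) - Q = (\<Sum>i<m. s i) + 2 * g 0 0 + 2 * g m m + 2 * g (m+1) (m+1) - 2 * g a a"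
    using Qeq E' ssum D' tot ua bb gsym[of a "m+1"] gsym[of "a+2" "m+1"] by simp
  have split: "(\<Sum>i<m. s i) = (\<Sum>i<a. s i) + s a + s (a+1) + (\<Sum>i\<in>{a+2..<m}. s i)"
  proof -
    have "(\<Sum>i<m. s i) = (\<Sum>i\<in>{0..<a+2}. s i) + (\<Sum>i\<in>{a+2..<m}. s i)"
      using sum.atLeastLessThan_concat[of 0 "a+2" m s] am by (simp add: lessThan_atLeast0)
    moreover have "(\<Sum>i\<in>{0..<a+2}. s i) = (\<Sum>i<a. s i) + s a + s (a+1)"
      by (simp add: lessThan_atLeast0[symmetric])
    ultimately show ?thesis by simp
  qed
  have mid: "s a + s (a+1) = 2 * g a a + 2 * g (a+1) (a+1)"
  proof -
    have x2: "x (Suc (Suc a)) = - x a" using cons by (simp add: add_eq_0_iff)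
    have "g (Suc a) (Suc (Suc a)) = - g a (Suc a)"
      unfolding g_def x2 using gsym[of a "Suc a"] unfolding g_def by simp
    moreover have "g (Suc (Suc a)) (Suc (Suc a)) = g a a" unfolding gii x2 by simp
    ultimately show ?thesis unfolding sdef by simp
  qed
  have S1: "(\<Sum>i<a. s i) \<ge> 0" and S2: "(\<Sum>i\<in>{a+2..<m}. s i) \<ge> 0"
    unfolding s_def by (auto intro: sum_nonneg)
  have main: "4 * (\<Sum>i<m+2. (cmod (x i))^2) - Q = (\<Sum>i<a. s i) + (\<Sum>i\<in>{a+2..<m}. s i)
      + 2 * (cmod (x (a+1)))^2 + 2 * (cmod (x 0))^2 + 2 * (cmod (x m))^2 + 2 * (cmod (x (m+1)))^2"
    using main1 split mid by (simp add: gii)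
  show ?thesis
  proof (rule ccontr)
    assume "\<not> ?thesis"
    then have le: "4 * (\<Sum>i<m+2. (cmod (x i))^2) - Q \<le> 0" unfolding Q_def g_def by simp
    have nn: "(cmod z)^2 \<ge> 0" for z by simp
    have z1: "(\<Sum>i<a. s i) = 0" and z2: "(\<Sum>i\<in>{a+2..<m}. s i) = 0"
      and z3: "x (a+1) = 0" and z4: "x 0 = 0" and z5: "x m = 0" and z6: "x (m+1) = 0"
      using le main S1 S2 nn[of "x (a+1)"] nn[of "x 0"] nn[of "x m"] nn[of "x (m+1)"]
      by (smt (verit) zero_less_norm_iff zero_less_power)+
    have s1: "x i + x (Suc i) = 0" if "i < a" for i
    proof -
      have "s i = 0" using z1 that sum_nonneg_eq_0_iff[of "{..<a}" s] unfolding s_def by auto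
      then show ?thesis unfolding s_def by simp
    qed
    have s2: "x i + x (Suc i) = 0" if "a+2 \<le> i" "i < m" for i
    proof -
      have "s i = 0" using z2 that sum_nonneg_eq_0_iff[of "{a+2..<m}" s] unfolding s_def by auto
      then show ?thesis unfolding s_def by simp
    qed
    have left: "i \<le> a \<Longrightarrow> x i = 0" for i
    proof (induction i)
      case 0 then show ?case using z4 by simp
    next
      case (Suc i)
      have i1: "x i + x (Suc i) = 0" using s1 Suc.prems by simp
      have i2: "x i = 0" using Suc.IH Suc.prems by simp
      show ?case using i1 i2 by simp
    qed
    have right: "k \<le> m - (a+2) \<Longrightarrow> x (m - k) = 0" for k
    proof (induction k)
      case 0 then show ?case using z5 by simp
    next
      case (Suc k)
      have "x (m - Suc k) + x (Suc (m - Suc k)) = 0" using s2 Suc.prems am by simp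
      moreover have "Suc (m - Suc k) = m - k" using Suc.prems am by simp
      ultimately show ?case using Suc by simp
    qed
    have "x i = 0" if im: "i < m+2" for i
    proof -
      consider "i \<le> a" | "i = a+1" | "a+2 \<le> i \<and> i \<le> m" | "i = m+1" using im by linarith
      then show ?thesis
      proof cases
        case 1 then show ?thesis by (rule left)
      next
        case 2 then show ?thesis using z3 by simp
      next
        case 3 then have "m - i \<le> m - (a+2)" by linarith
        then show ?thesis using right[of "m - i"] 3 by simp
      next
        case 4 then show ?thesis using z6 by simp
      qed
    qed
    then show False using nz by blast
  qed
qed



definition cinner :: "nat \<Rightarrow> (nat \<Rightarrow> complex) \<Rightarrow> (nat \<Rightarrow> complex) \<Rightarrow> complex" where
  "cinner n x y = (\<Sum>i<n. cnj (x i) * y i)"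

definition mv :: "complex mat \<Rightarrow> nat \<Rightarrow> (nat \<Rightarrow> complex) \<Rightarrow> nat \<Rightarrow> complex" where
  "mv A n x i = (\<Sum>j<n. A $$ (i,j) * x j)"

lemma cinner_cong: "(\<And>i. i < n \<Longrightarrow> x i = x' i) \<Longrightarrow> (\<And>i. i < n \<Longrightarrow> y i = y' i) \<Longrightarrow> cinner n x y = cinner n x' y'"
  unfolding cinner_def by (intro sum.cong) auto

lemma mv_cong: "(\<And>i. i < n \<Longrightarrow> x i = x' i) \<Longrightarrow> mv A n x i = mv A n x' i"
  unfolding mv_def by (intro sum.cong) auto

lemma cinner_herm:
  assumes "\<And>i j. i < n \<Longrightarrow> j < n \<Longrightarrow> A $$ (j,i) = cnj (A $$ (i,j))"
  shows "cinner n x (mv A n y) = cinner n (mv A n x) y"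
proof -
  have "cinner n x (mv A n y) = (\<Sum>i<n. \<Sum>j<n. cnj (x i) * A $$ (i,j) * y j)"
    unfolding cinner_def mv_def by (simp add: sum_distrib_left mult.assoc)
  also have "\<dots> = (\<Sum>j<n. \<Sum>i<n. cnj (x i) * A $$ (i,j) * y j)" by (rule sum.swap)
  also have "\<dots> = (\<Sum>j<n. cnj (\<Sum>i<n. A $$ (j,i) * x i) * y j)"
    unfolding cnj_sum sum_distrib_right
  proof (intro sum.cong refl)
    fix j i assume "j \<in> {..<n}" "i \<in> {..<n}"
    then have "A $$ (i,j) = cnj (A $$ (j,i))" using assms[of j i] by simp
    then show "cnj (x i) * A $$ (i,j) * y j = cnj (A $$ (j,i) * x i) * y j" by simp
  qed
  also have "\<dots> = cinner n (mv A n x) y"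
    unfolding cinner_def mv_def ..
  finally show ?thesis .
qed

lemma cinner_bilin:
  "cinner n (\<lambda>i. \<alpha> * p i + \<beta> * q i) (\<lambda>i. \<gamma> * p i + \<delta> * q i) =
     cnj \<alpha> * \<gamma> * cinner n p p + cnj \<alpha> * \<delta> * cinner n p q + cnj \<beta> * \<gamma> * cinner n q p + cnj \<beta> * \<delta> * cinner n q q"
  unfolding cinner_def by (simp add: sum.distrib sum_distrib_left algebra_simps)

lemma cinner_swap: "cinner n q p = cnj (cinner n p q)"
  unfolding cinner_def by (simp add: mult.commute)

lemma cinner_self: "cinner n p p = complex_of_real (\<Sum>i<n. (cmod (p i))^2)"
  unfolding cinner_def of_real_sum
  by (intro sum.cong refl) (simp add: complex_norm_square[symmetric] mult.commute)

lemma cinner_self_pos: fixes p :: "nat \<Rightarrow> complex" shows "\<exists>i<n. p i \<noteq> 0 \<Longrightarrow> (\<Sum>i<n. (cmod (p i))^2) > 0"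
proof -
  assume "\<exists>i<n. p i \<noteq> 0"
  then obtain i where "i < n" "p i \<noteq> 0" by blast
  then have "(cmod (p i))^2 > 0" by simp
  moreover have "(cmod (p i))^2 \<le> (\<Sum>i<n. (cmod (p i))^2)"
    using \<open>i < n\<close> by (intro member_le_sum) auto
  ultimately show ?thesis by linarith
qed

lemma mv_lin: "mv A n (\<lambda>i. \<alpha> * p i + \<beta> * q i) i = \<alpha> * mv A n p i + \<beta> * mv A n q i"
  unfolding mv_def by (simp add: sum.distrib sum_distrib_left algebra_simps)

lemma real_eig:
  assumes herm: "\<And>i j. i < n \<Longrightarrow> j < n \<Longrightarrow> A $$ (j,i) = cnj (A $$ (i,j))"
    and ev: "\<And>i. i < n \<Longrightarrow> mv A n v i = c * v i" and nz: "\<exists>i<n. v i \<noteq> 0"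
  shows "Im c = 0"
proof -
  have e1: "cinner n v (mv A n v) = cinner n v (\<lambda>i. c * v i)"
    by (rule cinner_cong) (auto simp: ev)
  have e2: "cinner n (mv A n v) v = cinner n (\<lambda>i. c * v i) v"
    by (rule cinner_cong) (auto simp: ev)
  have e3: "cinner n v (\<lambda>i. c * v i) = c * cinner n v v"
    unfolding cinner_def by (simp add: sum_distrib_left mult.left_commute)
  have e4: "cinner n (\<lambda>i. c * v i) v = cnj c * cinner n v v"
    unfolding cinner_def by (simp add: sum_distrib_left mult.assoc)
  have "cinner n v (mv A n v) = c * cinner n v v" using e1 e3 by simp
  moreover have "cinner n (mv A n v) v = cnj c * cinner n v v" using e2 e4 by simp
  ultimately have "c * cinner n v v = cnj c * cinner n v v" using cinner_herm[OF herm] by metis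
  moreover have "cinner n v v \<noteq> 0"
    using cinner_self_pos[OF nz] unfolding cinner_self by (metis of_real_eq_0_iff less_irrefl)
  ultimately have "c = cnj c" by simp
  then show ?thesis by (metis cnj.simps(2) neg_equal_zero)
qed



lemma mv_vec:
  assumes "A \<in> carrier_mat n n" "v \<in> carrier_vec n" "i < n"
  shows "(A *\<^sub>v v) $ i = mv A n (\<lambda>j. v $ j) i"
  using assms by (simp add: mv_def scalar_prod_def lessThan_atLeast0)

lemma real_factor:
  fixes L :: "real mat"
  assumes L: "L \<in> carrier_mat n n" and sym: "\<And>i j. i < n \<Longrightarrow> j < n \<Longrightarrow> L $$ (i,j) = L $$ (j,i)"
  shows "\<exists>rs. char_poly L = prod_list (map (\<lambda>a. [:-a,1:]) rs) \<and> length rs = n"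
proof -
  interpret h: map_poly_inj_idom_hom complex_of_real ..
  define A where "A = map_mat complex_of_real L"
  have A: "A \<in> carrier_mat n n" using L unfolding A_def by simp
  have Aij: "A $$ (i,j) = complex_of_real (L $$ (i,j))" if "i < n" "j < n" for i j
    using L that unfolding A_def by simp
  have herm: "A $$ (j,i) = cnj (A $$ (i,j))" if "i < n" "j < n" for i j
    using that by (simp add: Aij sym)
  obtain cs where cs: "char_poly A = prod_list (map (\<lambda>a. [:-a,1:]) cs)" "length cs = n"
    using char_poly_factorized[OF A] by blast
  have cpA: "char_poly A = map_poly complex_of_real (char_poly L)"
    unfolding A_def by (rule of_real_hom.char_poly_hom[OF L])
  have real: "Im c = 0" if c: "c \<in> set cs" for c
  proof -
    have "poly (char_poly A) c = 0"
      unfolding cs using c by (auto simp: poly_prod_list prod_list_zero_iff o_def)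
    then have "eigenvalue A c" using eigenvalue_root_char_poly[OF A] by simp
    then obtain v where v: "eigenvector A v c" unfolding eigenvalue_def by blast
    then have vc: "v \<in> carrier_vec n" and vnz: "v \<noteq> 0\<^sub>v n" and ev: "A *\<^sub>v v = c \<cdot>\<^sub>v v"
      using A unfolding eigenvector_def by auto
    have ev': "mv A n (\<lambda>j. v $ j) i = c * v $ i" if "i < n" for i
    proof -
      have "(A *\<^sub>v v) $ i = c * v $ i" using ev that vc by simp
      then show ?thesis using mv_vec[OF A vc that] by simp
    qed
    have nz: "\<exists>i<n. v $ i \<noteq> 0"
    proof (rule ccontr)
      assume "\<not> ?thesis"
      then have "v = 0\<^sub>v n" using vc by (intro eq_vecI) auto
      then show False using vnz by simp
    qed
    show ?thesis by (rule real_eig[OF herm ev' nz])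
  qed
  define rs where "rs = map Re cs"
  have csr: "cs = map complex_of_real rs"
    unfolding rs_def map_map using real by (intro map_idI[symmetric]) (auto intro: complex_eqI)
  have "map_poly complex_of_real (char_poly L) = map_poly complex_of_real (prod_list (map (\<lambda>a. [:-a,1:]) rs))"
    unfolding cpA[symmetric] cs(1) csr h.hom_prod_list by (simp add: o_def)
  then have "char_poly L = prod_list (map (\<lambda>a. [:-a,1:]) rs)" by (rule h.injectivity)
  moreover have "length rs = n" using cs(2) unfolding rs_def by simp
  ultimately show ?thesis by blast
qed



lemma prod_lin_mset: "mset xs = mset ys \<Longrightarrow> prod_list (map (\<lambda>a. [:-a,1:]) xs) = prod_list (map (\<lambda>a. [:-a,1::'a::comm_ring_1:]) ys)"
  by (metis mset_map prod_mset_prod_list)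

lemma eig_desc:
  assumes "char_poly M = prod_list (map (\<lambda>a. [:-a,1:]) rs)"
  shows "eigenvalues_desc M = rev (sort rs)"
proof -
  let ?es = "rev (sort rs)"
  have s: "sorted_wrt (\<ge>) ?es" by (simp add: sorted_wrt_rev)
  have m: "mset ?es = mset rs" by simp
  have p: "char_poly M = prod_list (map (\<lambda>a. [:-a,1:]) ?es)"
    unfolding assms by (rule prod_lin_mset) (simp)
  show ?thesis unfolding eigenvalues_desc_def
  proof (rule the_equality)
    show "sorted_wrt (\<ge>) ?es \<and> char_poly M = prod_list (map (\<lambda>a. [:-a,1:]) ?es)" using s p by blast
  next
    fix xs assume "sorted_wrt (\<ge>) xs \<and> char_poly M = prod_list (map (\<lambda>a. [:-a,1:]) xs)"
    then have "sorted_wrt (\<ge>) xs" "mset xs = mset ?es"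
      using lin_prod_mset_eq[of xs ?es] p by auto
    then show "xs = ?es" using sorted_desc_mset_eq s by blast
  qed
qed



lemma sum_first_two:
  fixes f :: "nat \<Rightarrow> 'a::comm_monoid_add"
  assumes "2 \<le> n" "\<And>k. 2 \<le> k \<Longrightarrow> k < n \<Longrightarrow> f k = 0"
  shows "(\<Sum>k<n. f k) = f 0 + f 1"
proof -
  have "(\<Sum>k<n. f k) = (\<Sum>k<2. f k)"
    by (rule sum.mono_neutral_right) (use assms in auto)
  also have "\<dots> = f 0 + f 1" by (simp add: numeral_2_eq_2)
  finally show ?thesis .
qed

lemma cinner_lin2: "cinner n x (\<lambda>i. \<gamma> * p i + \<delta> * q i) = \<gamma> * cinner n x p + \<delta> * cinner n x q"
  unfolding cinner_def by (simp add: sum.distrib sum_distrib_left algebra_simps)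

lemma mult_entry:
  assumes "X \<in> carrier_mat n n" "Y \<in> carrier_mat n n" "i < n" "j < n"
  shows "(X * Y) $$ (i,j) = (\<Sum>k<n. X $$ (i,k) * Y $$ (k,j))"
  using assms by (simp add: scalar_prod_def lessThan_atLeast0)

lemma two_big:
  fixes L :: "real mat" and es :: "real list"
  assumes L: "L \<in> carrier_mat n n" and sym: "\<And>i j. i < n \<Longrightarrow> j < n \<Longrightarrow> L $$ (i,j) = L $$ (j,i)"
    and cp: "char_poly L = prod_list (map (\<lambda>a. [:-a,1:]) es)" and len: "length es = n" and n2: "2 \<le> n"
    and e0: "es ! 0 \<ge> 4" and e1: "es ! 1 \<ge> 4"
  shows "\<exists>x::nat \<Rightarrow> complex. (\<exists>i<n. x i \<noteq> 0) \<and> x a + x b = 0 \<and>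
     Re (cinner n x (mv (map_mat complex_of_real L) n x)) \<ge> 4 * (\<Sum>i<n. (cmod (x i))^2)"
proof -
  interpret h: map_poly_inj_idom_hom complex_of_real ..
  define A where "A = map_mat complex_of_real L"
  have A: "A \<in> carrier_mat n n" using L unfolding A_def by simp
  have Aij: "A $$ (i,j) = complex_of_real (L $$ (i,j))" if "i < n" "j < n" for i j
    using L that unfolding A_def by simp
  have herm: "A $$ (j,i) = cnj (A $$ (i,j))" if "i < n" "j < n" for i j
    using that by (simp add: Aij sym)
  define es' where "es' = map complex_of_real es"
  have cpA: "char_poly A = prod_list (map (\<lambda>a. [:-a,1:]) es')"
  proof -
    have "char_poly A = map_poly complex_of_real (char_poly L)"
      unfolding A_def by (rule of_real_hom.char_poly_hom[OF L])
    also have "\<dots> = prod_list (map (\<lambda>a. [:-a,1:]) es')"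
      unfolding cp h.hom_prod_list es'_def by (simp add: o_def)
    finally show ?thesis .
  qed
  obtain B P Q where schur: "schur_decomposition A es' = (B,P,Q)"
    by (cases "schur_decomposition A es'") auto
  from schur_decomposition[OF A cpA schur]
  have sim: "similar_mat_wit A B P Q" and ut: "upper_triangular B" and dg: "diag_mat B = es'"
    by auto
  from sim A have Bc: "B \<in> carrier_mat n n" and Pc: "P \<in> carrier_mat n n" and Qc: "Q \<in> carrier_mat n n"
    and PQ: "P * Q = 1\<^sub>m n" and QP: "Q * P = 1\<^sub>m n" and AeQ: "A = P * B * Q"
    unfolding similar_mat_wit_def Let_def by auto
  have AP: "A * P = P * B"
  proof -
    have "A * P = P * B * Q * P" using AeQ by simp
    also have "\<dots> = P * B * (Q * P)" using Pc Bc Qc by (meson assoc_mult_mat mult_carrier_mat)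
    also have "\<dots> = P * B" unfolding QP using Pc Bc by (simp add: right_mult_one_mat mult_carrier_mat)
    finally show ?thesis .
  qed
  have Bz: "B $$ (k,j) = 0" if "j < k" "k < n" for k j
    using ut that Bc unfolding upper_triangular_def by auto
  have Bd: "B $$ (i,i) = es' ! i" if "i < n" for i
  proof -
    have "diag_mat B ! i = B $$ (i,i)" using that Bc unfolding diag_mat_def by simp
    then show ?thesis using dg by simp
  qed
  define E0 where "E0 = complex_of_real (es ! 0)"
  define E1 where "E1 = complex_of_real (es ! 1)"
  have B00: "B $$ (0,0) = E0" using Bd[of 0] n2 len unfolding E0_def es'_def by simp
  have B11: "B $$ (1,1) = E1" using Bd[of 1] n2 len unfolding E1_def es'_def by simp
  define p0 where "p0 k = P $$ (k,0)" for k
  define p1 where "p1 k = P $$ (k,1)" for k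
  define b01 where "b01 = B $$ (0,1)"
  have APe: "mv A n (\<lambda>k. P $$ (k,j)) i = (\<Sum>k<n. P $$ (i,k) * B $$ (k,j))" if "i < n" "j < n" for i j
  proof -
    have "(A * P) $$ (i,j) = (P * B) $$ (i,j)" using AP by simp
    then show ?thesis unfolding mult_entry[OF A Pc that] mult_entry[OF Pc Bc that] mv_def .
  qed
  have eq0: "mv A n p0 i = E0 * p0 i" if "i < n" for i
  proof -
    have "mv A n p0 i = (\<Sum>k<n. P $$ (i,k) * B $$ (k,0))" unfolding p0_def using APe[OF that] n2 by simp
    also have "\<dots> = P $$ (i,0) * B $$ (0,0) + P $$ (i,1) * B $$ (1,0)"
      by (rule sum_first_two[OF n2]) (simp add: Bz)
    also have "\<dots> = E0 * p0 i" using Bz[of 0 1] n2 B00 unfolding p0_def by simp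
    finally show ?thesis .
  qed
  have eq1: "mv A n p1 i = b01 * p0 i + E1 * p1 i" if "i < n" for i
  proof -
    have "mv A n p1 i = (\<Sum>k<n. P $$ (i,k) * B $$ (k,1))" unfolding p1_def using APe[OF that] n2 by simp
    also have "\<dots> = P $$ (i,0) * B $$ (0,1) + P $$ (i,1) * B $$ (1,1)"
      by (rule sum_first_two[OF n2]) (simp add: Bz)
    also have "\<dots> = b01 * p0 i + E1 * p1 i" using B11 unfolding p0_def p1_def b01_def by simp
    finally show ?thesis .
  qed
  have indep: "\<alpha> = 0 \<and> \<beta> = 0" if h0: "\<And>i. i < n \<Longrightarrow> \<alpha> * p0 i + \<beta> * p1 i = 0" for \<alpha> \<beta>
  proof -
    have row: "\<alpha> * (Q * P) $$ (r,0) + \<beta> * (Q * P) $$ (r,1) = 0" if "r < n" for r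
    proof -
      have m0: "(Q * P) $$ (r,0) = (\<Sum>k<n. Q $$ (r,k) * P $$ (k,0))"
        using mult_entry[OF Qc Pc that, of 0] n2 by simp
      have m1: "(Q * P) $$ (r,1) = (\<Sum>k<n. Q $$ (r,k) * P $$ (k,1))"
        using mult_entry[OF Qc Pc that, of 1] n2 by simp
      have "\<alpha> * (Q * P) $$ (r,0) + \<beta> * (Q * P) $$ (r,1) = (\<Sum>k<n. Q $$ (r,k) * (\<alpha> * p0 k + \<beta> * p1 k))"
        unfolding m0 m1 p0_def p1_def
        by (simp add: sum_distrib_left sum.distrib algebra_simps)
      also have "\<dots> = 0" using h0 by simp
      finally show ?thesis .
    qed
    from row[of 0] row[of 1] n2 show ?thesis unfolding QP by simp
  qed
  have p0nz: "\<exists>i<n. p0 i \<noteq> 0"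
  proof (rule ccontr)
    assume "\<not> ?thesis"
    then have "\<And>i. i < n \<Longrightarrow> 1 * p0 i + 0 * p1 i = 0" by simp
    from indep[OF this] show False by simp
  qed
  define np0 where "np0 = (\<Sum>i<n. (cmod (p0 i))^2)"
  have np0pos: "np0 > 0" unfolding np0_def by (rule cinner_self_pos[OF p0nz])
  have P00: "cinner n p0 p0 = complex_of_real np0" unfolding np0_def by (rule cinner_self)
  define k where "k = cinner n p0 p1 / cinner n p0 p0"
  define w where "w i = (-k) * p0 i + 1 * p1 i" for i
  have p0w: "cinner n p0 w = 0"
  proof -
    have "cinner n p0 w = (-k) * cinner n p0 p0 + cinner n p0 p1"
      unfolding w_def[abs_def] cinner_lin2 by simp
    also have "\<dots> = 0" unfolding k_def using P00 np0pos by simp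
    finally show ?thesis .
  qed
  have wp0: "cinner n w p0 = 0" using p0w cinner_swap[of n w p0] by simp
  define c where "c = b01 + E1 * k - k * E0"
  have Mw1: "mv A n w i = E1 * w i + c * p0 i" if "i < n" for i
    unfolding w_def[abs_def] mv_lin eq0[OF that] eq1[OF that] c_def by (simp add: algebra_simps)
  have "cinner n p0 (mv A n w) = 0"
  proof -
    have "cinner n p0 (mv A n w) = cinner n (mv A n p0) w" by (rule cinner_herm[OF herm])
    also have "\<dots> = cinner n (\<lambda>i. E0 * p0 i) w" by (rule cinner_cong) (auto simp: eq0)
    also have "\<dots> = cnj E0 * cinner n p0 w" unfolding cinner_def by (simp add: sum_distrib_left mult_ac)
    finally show ?thesis using p0w by simp
  qed
  moreover have "cinner n p0 (mv A n w) = c * complex_of_real np0"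
  proof -
    have "cinner n p0 (mv A n w) = cinner n p0 (\<lambda>i. E1 * w i + c * p0 i)" by (rule cinner_cong) (auto simp: Mw1)
    also have "\<dots> = E1 * cinner n p0 w + c * cinner n p0 p0"
      by (rule cinner_lin2)
    finally show ?thesis using p0w P00 by simp
  qed
  ultimately have c0: "c = 0" using np0pos by simp
  have Mw: "mv A n w i = E1 * w i" if "i < n" for i using Mw1[OF that] c0 by simp
  define nw where "nw = (\<Sum>i<n. (cmod (w i))^2)"
  have nw0: "nw \<ge> 0" unfolding nw_def by (auto intro: sum_nonneg)
  have Www: "cinner n w w = complex_of_real nw" unfolding nw_def by (rule cinner_self)
  define l where "l v = v a + v b" for v :: "nat \<Rightarrow> complex"
  obtain \<alpha> \<beta> where ab: "\<alpha> \<noteq> 0 \<or> \<beta> \<noteq> 0" and lab: "\<alpha> * l p0 + \<beta> * l w = 0"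
  proof (cases "l p0 = 0")
    case True then show ?thesis using that[of 1 0] by simp
  next
    case False then show ?thesis using that[of "l w" "- l p0"] by (simp add: algebra_simps)
  qed
  define x where "x i = \<alpha> * p0 i + \<beta> * w i" for i
  have lx: "x a + x b = 0" using lab unfolding x_def l_def by (simp add: algebra_simps)
  have xnz: "\<exists>i<n. x i \<noteq> 0"
  proof (rule ccontr)
    assume "\<not> ?thesis"
    then have "\<And>i. i < n \<Longrightarrow> (\<alpha> - \<beta> * k) * p0 i + \<beta> * p1 i = 0"
      unfolding x_def w_def by (simp add: algebra_simps)
    from indep[OF this] have "\<beta> = 0" "\<alpha> - \<beta> * k = 0" by auto
    then show False using ab by simp
  qed
  have Mx: "mv A n x i = (\<alpha> * E0) * p0 i + (\<beta> * E1) * w i" if "i < n" for i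
    unfolding x_def[abs_def] mv_lin eq0[OF that] Mw[OF that] by simp
  have na: "cnj \<alpha> * \<alpha> = complex_of_real ((cmod \<alpha>)^2)" by (simp add: complex_norm_square[symmetric] mult.commute)
  have nb: "cnj \<beta> * \<beta> = complex_of_real ((cmod \<beta>)^2)" by (simp add: complex_norm_square[symmetric] mult.commute)
  have q1: "cinner n x (mv A n x) = complex_of_real ((cmod \<alpha>)^2 * es ! 0 * np0 + (cmod \<beta>)^2 * es ! 1 * nw)"
  proof -
    have "cinner n x (mv A n x) = cinner n x (\<lambda>i. (\<alpha> * E0) * p0 i + (\<beta> * E1) * w i)"
      by (rule cinner_cong) (auto simp: Mx)
    also have "\<dots> = (cnj \<alpha> * \<alpha>) * E0 * cinner n p0 p0 + (cnj \<beta> * \<beta>) * E1 * cinner n w w"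
      unfolding x_def[abs_def] cinner_bilin p0w wp0 by (simp add: mult_ac)
    also have "\<dots> = complex_of_real ((cmod \<alpha>)^2 * es ! 0 * np0 + (cmod \<beta>)^2 * es ! 1 * nw)"
      unfolding na nb P00 Www E0_def E1_def by simp
    finally show ?thesis .
  qed
  have q2: "complex_of_real (\<Sum>i<n. (cmod (x i))^2) = complex_of_real ((cmod \<alpha>)^2 * np0 + (cmod \<beta>)^2 * nw)"
  proof -
    have "complex_of_real (\<Sum>i<n. (cmod (x i))^2) = cinner n x x" by (rule cinner_self[symmetric])
    also have "\<dots> = (cnj \<alpha> * \<alpha>) * cinner n p0 p0 + (cnj \<beta> * \<beta>) * cinner n w w"
      unfolding x_def[abs_def] cinner_bilin p0w wp0 by (simp add: mult_ac)
    also have "\<dots> = complex_of_real ((cmod \<alpha>)^2 * np0 + (cmod \<beta>)^2 * nw)"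
      unfolding na nb P00 Www by simp
    finally show ?thesis .
  qed
  then have q2': "(\<Sum>i<n. (cmod (x i))^2) = (cmod \<alpha>)^2 * np0 + (cmod \<beta>)^2 * nw"
    using of_real_eq_iff by blast
  have t1: "(cmod \<alpha>)^2 * es ! 0 * np0 \<ge> 4 * ((cmod \<alpha>)^2 * np0)"
  proof -
    have "(cmod \<alpha>)^2 * np0 \<ge> 0" using np0pos by simp
    from mult_right_mono[OF e0 this] show ?thesis by (simp add: mult_ac)
  qed
  have t2: "(cmod \<beta>)^2 * es ! 1 * nw \<ge> 4 * ((cmod \<beta>)^2 * nw)"
  proof -
    have "(cmod \<beta>)^2 * nw \<ge> 0" using nw0 by simp
    from mult_right_mono[OF e1 this] show ?thesis by (simp add: mult_ac)
  qed
  have "Re (cinner n x (mv A n x)) \<ge> 4 * (\<Sum>i<n. (cmod (x i))^2)"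
    unfolding q1 q2' Re_complex_of_real using t1 t2 by (simp add: distrib_left)
  then show ?thesis using xnz lx unfolding A_def by blast
qed



lemma edge_sym: "Pntpp_edge n t i j = Pntpp_edge n t j i"
  unfolding Pntpp_edge_def by blast

lemma main_mt:
  assumes am: "a + 2 \<le> m"
  shows "mu (laplacian (m+2) (Pntpp_edge (m+2) (Suc a))) 2 < 4"
proof -
  define n where "n = m + 2"
  define L where "L = laplacian (m+2) (Pntpp_edge (m+2) (Suc a))"
  have L: "L \<in> carrier_mat n n" unfolding L_def laplacian_def n_def by simp
  have sym: "L $$ (i,j) = L $$ (j,i)" if "i < n" "j < n" for i j
    using that unfolding L_def n_def by (cases "i = j") (simp_all add: laplacian_def edge_sym[of _ _ i j])
  obtain rs where rs: "char_poly L = prod_list (map (\<lambda>a. [:-a,1:]) rs)" "length rs = n"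
    using real_factor[OF L sym] by blast
  define es where "es = rev (sort rs)"
  have ed: "eigenvalues_desc L = es" unfolding es_def by (rule eig_desc[OF rs(1)])
  have cp: "char_poly L = prod_list (map (\<lambda>a. [:-a,1:]) es)"
    unfolding rs(1) es_def by (rule prod_lin_mset) simp
  have len: "length es = n" using rs(2) unfolding es_def by simp
  have n2: "2 \<le> n" unfolding n_def by simp
  have sorted: "sorted_wrt (\<ge>) es" unfolding es_def by (simp add: sorted_wrt_rev)
  have mu2: "mu L 2 = es ! 1" unfolding mu_def ed by simp
  show ?thesis
  proof (rule ccontr)
    assume "\<not> ?thesis"
    then have e1: "es ! 1 \<ge> 4" using mu2 unfolding L_def by simp
    have "es ! 0 \<ge> es ! 1" using sorted len n2 by (auto simp: sorted_wrt_iff_nth_less)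
    then have e0: "es ! 0 \<ge> 4" using e1 by simp
    obtain x :: "nat \<Rightarrow> complex" where xnz: "\<exists>i<n. x i \<noteq> 0" and lx: "x a + x (a+2) = 0"
      and ge: "Re (cinner n x (mv (map_mat complex_of_real L) n x)) \<ge> 4 * (\<Sum>i<n. (cmod (x i))^2)"
      using two_big[OF L sym cp len n2 e0 e1, of a "a+2"] by blast
    have "Re (cinner n x (mv (map_mat complex_of_real L) n x)) =
        (\<Sum>i<n. \<Sum>j<n. L $$ (i,j) * Re (cnj (x i) * x j))"
    proof -
      have "cinner n x (mv (map_mat complex_of_real L) n x) =
          (\<Sum>i<n. \<Sum>j<n. complex_of_real (L $$ (i,j)) * (cnj (x i) * x j))"
        unfolding cinner_def mv_def sum_distrib_left
        by (intro sum.cong refl) (use L in \<open>auto simp: mult_ac\<close>)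
      then show ?thesis by (simp add: Re_sum)
    qed
    moreover have "(\<Sum>i<n. \<Sum>j<n. L $$ (i,j) * Re (cnj (x i) * x j)) < 4 * (\<Sum>i<n. (cmod (x i))^2)"
      unfolding L_def n_def by (rule key_form[OF am lx]) (use xnz n_def in simp)
    ultimately show False using ge by simp
  qed
qed

theorem lemma4p3:
  fixes n t :: nat
  assumes "1 \<le> t" and "t + 3 \<le> n"
  shows "mu (laplacian n (Pntpp_edge n t)) 2 < 4"
proof -
  obtain a where t: "t = Suc a" using assms(1) by (cases t) auto
  obtain m where n: "n = m + 2" using assms(2) by (intro that[of "n - 2"]) simp
  have "a + 2 \<le> m" using assms(2) unfolding t n by simp
  then show ?thesis unfolding t n by (rule main_mt)
qed

end
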